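(* Let $0<p<\infty$, $0<r<1$, and let $\mathcal{S}=\{S_k\}_{k\ge0}$ be a sparse sequence. Then $$\|\mathcal{C}_\mathcal{S}f\|_{L^p(\Omega)}\lesssim\|f\|_{L^p(\Omega)}\qquad\text{for all }f\in L^p(\Omega),$$ where $\mathcal{C}_\mathcal{S}f:=\sum_{k\ge0}\mathbf{1}_{S_k}\mathsf{P}^r_k(f)$ and the implicit constant is independent of $f$ and $\mathcal{S}$.
   Context: $(\Omega,\mathcal{F},\mu)$ is a probability space with a regular filtration $\{\mathcal{F}_k\}_{k\ge0}$ generating $\mathcal{F}$ (i.e. there is $R>0$ with $\mathsf{E}_kf\le R\,\mathsf{E}_{k-1}f$ a.e. for nonnegative integrable $f$), $\mathsf{E}_k=\mathsf{E}[\cdot|\mathcal{F}_k]$. $\mathsf{P}^r_kg(x):=\inf\{t\in\mathbb{Q}:\mathsf{E}_k[\mathbf{1}_{\{g>t\}}](x)\le r\}$. An adapted sequence $\{S_k\}$ ($S_k\in\mathcal{F}_k$) is sparse if for every $k$ and every $\mathcal{F}_k$-measurable $A\subseteq S_k$, $\mu(A\setminus\bigcup_{m\ge k+1}S_m)\ge\frac12\mu(A)$. *)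

theory Defs
  imports "HOL-Probability.Probability"
begin

definition generating_filtration :: "'a measure \<Rightarrow> (nat \<Rightarrow> 'a measure) \<Rightarrow> bool" where
  "generating_filtration M F \<longleftrightarrow>
     (\<forall>k. subalgebra M (F k)) \<and>
     (\<forall>k. sets (F k) \<subseteq> sets (F (Suc k))) \<and>
     sets M = sigma_sets (space M) (\<Union>k. sets (F k))"

definition regular_filtration :: "'a measure \<Rightarrow> (nat \<Rightarrow> 'a measure) \<Rightarrow> bool" where
  "regular_filtration M F \<longleftrightarrow>
     (\<exists>R>0. \<forall>k\<ge>1. \<forall>f. integrable M f \<and> (\<forall>x\<in>space M. f x \<ge> 0) \<longrightarrow>
        (AE x in M. real_cond_exp M (F k) f x \<le> R * real_cond_exp M (F (k - 1)) f x))"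

definition Pr_op :: "'a measure \<Rightarrow> (nat \<Rightarrow> 'a measure) \<Rightarrow> real \<Rightarrow> nat \<Rightarrow> ('a \<Rightarrow> real) \<Rightarrow> 'a \<Rightarrow> real" where
  "Pr_op M F r k g x =
     Inf {t::real. t \<in> \<rat> \<and>
        real_cond_exp M (F k) (indicator {y \<in> space M. g y > t}) x \<le> r}"

definition sparse_seq :: "'a measure \<Rightarrow> (nat \<Rightarrow> 'a measure) \<Rightarrow> (nat \<Rightarrow> 'a set) \<Rightarrow> bool" where
  "sparse_seq M F S \<longleftrightarrow>
     (\<forall>k. S k \<in> sets (F k)) \<and>
     (\<forall>k A. A \<in> sets (F k) \<and> A \<subseteq> S k \<longrightarrow>
        measure M (A - (\<Union>m\<in>{Suc k..}. S m)) \<ge> 1/2 * measure M A)"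

definition sparse_op :: "'a measure \<Rightarrow> (nat \<Rightarrow> 'a measure) \<Rightarrow> real \<Rightarrow> (nat \<Rightarrow> 'a set) \<Rightarrow> ('a \<Rightarrow> real) \<Rightarrow> 'a \<Rightarrow> real" where
  "sparse_op M F r S f x = (\<Sum>k. indicator (S k) x * Pr_op M F r k f x)"

end

theory Submission
  imports Defs
begin

lemma incr_ge1:
  fixes a b p :: real
  assumes "p \<ge> 1" "a \<ge> 0" "b \<ge> 0"
  shows "(a+b) powr p \<le> a powr p + p*b*(a+b) powr (p-1)"
proof (cases "a + b = 0")
  case True then show ?thesis using assms by simp
next
  case False
  hence c: "a + b > 0" using assms by linarith
  show ?thesis
  proof (cases "a = 0")
    case True
    have "b powr p = b * b powr (p-1)" using c True
      by (simp add: powr_mult_base)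
    also have "\<dots> \<le> p * b * b powr (p-1)" using assms mult_right_mono[of 1 p b] by (intro mult_right_mono) auto
    finally show ?thesis using True by simp
  next
    case False
    hence a: "a > 0" using assms by simp
    have "a powr p - (a+b) powr p \<ge> (p * (a+b) powr (p-1)) * (a - (a+b))"
      apply (rule convex_on_imp_above_tangent[where A="{0<..}"])
      using powr_convex[OF assms(1)] c a
      by (auto intro!: has_field_derivative_at_within has_real_derivative_powr simp: interior_open)
    then show ?thesis by (simp add: algebra_simps)
  qed
qed

lemma incr_le1:
  fixes a b p :: real
  assumes "0 < p" "p \<le> 1" "a \<ge> 0" "b \<ge> 0"
  shows "(a+b) powr p \<le> a powr p + b powr p"
proof (cases "a + b = 0")
  case True then show ?thesis using assms by simp
next
  case False
  hence c: "a + b > 0" using assms by linarith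
  have 1: "a/(a+b) \<le> (a/(a+b)) powr p"
    using powr_mono'[of p 1 "a/(a+b)"] assms c by auto
  have 2: "b/(a+b) \<le> (b/(a+b)) powr p"
    using powr_mono'[of p 1 "b/(a+b)"] assms c by auto
  have "1 \<le> (a/(a+b)) powr p + (b/(a+b)) powr p"
  proof -
    have "a/(a+b) + b/(a+b) = 1" using c by (simp add: add_divide_distrib[symmetric])
    then show ?thesis using 1 2 by linarith
  qed
  also have "\<dots> = (a powr p + b powr p) / (a+b) powr p"
    using assms c by (simp add: powr_divide add_divide_distrib)
  finally show ?thesis using c by (simp add: le_divide_eq)
qed

lemma young_like:
  fixes a b p K :: real
  assumes "p \<ge> 1" "K > 0" "a \<ge> 0" "b \<ge> 0"
  shows "a * b powr (p-1) \<le> K powr (p-1) * a powr p + b powr p / K"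
proof (cases "b \<le> K * a")
  case True
  have "b powr (p-1) \<le> (K*a) powr (p-1)" using assms True by (intro powr_mono2) auto
  hence "a * b powr (p-1) \<le> a * (K*a) powr (p-1)" using assms by (intro mult_left_mono) auto
  also have "\<dots> = K powr (p-1) * (a * a powr (p-1))" using assms by (simp add: powr_mult)
  also have "a * a powr (p-1) = a powr p"
    using assms by (cases "a = 0") (auto simp: powr_mult_base)
  finally show ?thesis using assms by (smt (verit) divide_nonneg_nonneg powr_ge_zero)
next
  case False
  hence "a \<le> b / K" using assms by (simp add: le_divide_eq mult.commute)
  hence "a * b powr (p-1) \<le> b / K * b powr (p-1)" by (intro mult_right_mono) auto
  also have "\<dots> = (b * b powr (p-1)) / K" by simp
  also have "b * b powr (p-1) = b powr p"
    using assms False by (cases "b = 0") (auto simp: powr_mult_base)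
  finally show ?thesis using assms
    by (smt (verit) mult_nonneg_nonneg powr_ge_zero)
qed

lemma quantile_bound:
  fixes e :: "real \<Rightarrow> real" and G r \<rho> s :: real
  assumes s: "s > 0" and rho: "\<rho> > 0" "\<rho> \<le> r" "\<rho> \<le> 1 - r"
    and a: "\<And>q. q \<in> \<rat> \<Longrightarrow> q > 0 \<Longrightarrow> e q \<le> G / q powr s"
    and b: "\<And>q. q \<in> \<rat> \<Longrightarrow> q < 0 \<Longrightarrow> e q \<ge> 1 - G / (-q) powr s"
  shows "\<bar>Inf {t. t \<in> \<rat> \<and> e t \<le> r}\<bar> \<le> (max 0 G / \<rho>) powr (1/s)"
proof -
  define B where "B = (max 0 G / \<rho>) powr (1/s)"
  define T where "T = {t. t \<in> \<rat> \<and> e t \<le> r}"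
  have B0: "B \<ge> 0" unfolding B_def by simp
  have Bs: "B powr s = max 0 G / \<rho>" unfolding B_def using s rho by (simp add: powr_powr)
  have key: "G / q powr s < \<rho>" if "q > B" for q
  proof -
    have "q powr s > B powr s" using that B0 s by (intro powr_less_mono2) auto
    hence "q powr s > max 0 G / \<rho>" using Bs by simp
    hence "\<rho> * q powr s > max 0 G" using rho by (simp add: divide_less_eq mult.commute)
    moreover have "q powr s > 0" using that B0 by simp
    ultimately show ?thesis by (simp add: divide_less_eq mult.commute)
  qed
  have c1: "q \<in> T" if "q \<in> \<rat>" "q > B" for q
    using a[OF that(1)] key[OF that(2)] that B0 rho unfolding T_def by auto
  have c2: "t \<ge> -B" if "t \<in> T" for t
  proof (rule ccontr)
    assume "\<not> t \<ge> -B"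
    hence "-t > B" by simp
    hence "G / (-t) powr s < \<rho>" by (rule key)
    moreover have "t < 0" using \<open>-t > B\<close> B0 by simp
    ultimately have "e t > r" using b[of t] that rho unfolding T_def by auto
    thus False using that unfolding T_def by auto
  qed
  obtain q0 where q0: "q0 \<in> \<rat>" "B < q0" "q0 < B + 1" using Rats_dense_in_real[of B "B+1"] by auto
  have ne: "T \<noteq> {}" using c1[OF q0(1,2)] by auto
  have bdd: "bdd_below T" unfolding bdd_below_def using c2 by blast
  have lo: "Inf T \<ge> -B" using ne c2 by (intro cInf_greatest) auto
  have hi: "Inf T \<le> B"
  proof (rule ccontr)
    assume "\<not> Inf T \<le> B"
    then obtain q where q: "q \<in> \<rat>" "B < q" "q < Inf T" using Rats_dense_in_real[of B "Inf T"] by auto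
    have "Inf T \<le> q" using c1[OF q(1,2)] bdd by (intro cInf_lower)
    thus False using q by simp
  qed
  show ?thesis using lo hi unfolding B_def T_def by simp
qed

lemma sfs: assumes "prob_space M" "subalgebra M G" shows "sigma_finite_subalgebra M G"
proof -
  interpret prob_space M by fact
  interpret finite_measure_subalgebra M G by unfold_locales (use assms in auto)
  show ?thesis by unfold_locales
qed

lemma sparse_ineq:
  fixes \<phi> :: "'a \<Rightarrow> ennreal"
  assumes P: "prob_space M" and sub: "subalgebra M G" and SG: "S \<in> sets G" and U: "U \<in> sets M"
    and hyp: "\<And>A. A \<in> sets G \<Longrightarrow> A \<subseteq> S \<Longrightarrow> measure M (A - U) \<ge> 1/2 * measure M A"
    and phi: "\<phi> \<in> borel_measurable G"
  shows "(\<integral>\<^sup>+ x. indicator S x * \<phi> x \<partial>M) \<le> 2 * (\<integral>\<^sup>+ x. indicator (S - U) x * \<phi> x \<partial>M)"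
  using phi
proof (induction rule: borel_measurable_induct)
  case (cong f g)
  have sp: "space G = space M" using sub by (simp add: subalgebra_def)
  have "(\<integral>\<^sup>+ x. indicator S x * f x \<partial>M) = (\<integral>\<^sup>+ x. indicator S x * g x \<partial>M)"
    using cong(3) sp by (intro nn_integral_cong) auto
  moreover have "(\<integral>\<^sup>+ x. indicator (S-U) x * f x \<partial>M) = (\<integral>\<^sup>+ x. indicator (S-U) x * g x \<partial>M)"
    using cong(3) sp by (intro nn_integral_cong) auto
  ultimately show ?case using cong by simp
next
  case (set A)
  interpret prob_space M by fact
  have AM: "A \<in> sets M" and SM: "S \<in> sets M" using set SG sub by (auto simp: subalgebra_def)
  have AS: "A \<inter> S \<in> sets G" using set SG by auto
  have m1: "measure M (A \<inter> S) \<le> 2 * measure M (A \<inter> S - U)" using hyp[OF AS] by auto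
  have "A \<inter> S - U = A \<inter> (S - U)" by auto
  hence "emeasure M (S \<inter> A) \<le> 2 * emeasure M ((S - U) \<inter> A)"
  proof -
    have "ennreal (measure M (A \<inter> S)) \<le> ennreal (2 * measure M (A \<inter> (S - U)))"
      using m1 \<open>A \<inter> S - U = A \<inter> (S - U)\<close> by (intro ennreal_leI) auto
    thus ?thesis using AM SM U by (simp add: emeasure_eq_measure Int_commute ennreal_mult'' Int_Diff)
  qed
  moreover have "(\<integral>\<^sup>+ x. indicator S x * indicator A x \<partial>M) = emeasure M (S \<inter> A)"
    using AM SM by (simp add: indicator_inter_arith[symmetric])
  moreover have "(\<integral>\<^sup>+ x. indicator (S-U) x * indicator A x \<partial>M) = emeasure M ((S-U) \<inter> A)"
    using AM SM U by (simp add: indicator_inter_arith[symmetric])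
  ultimately show ?case by simp
next
  case (mult u c)
  have um: "u \<in> borel_measurable M" using measurable_from_subalg[OF sub mult(2)] .
  have SM: "S \<in> sets M" using SG sub by (auto simp: subalgebra_def)
  have "(\<integral>\<^sup>+ x. indicator S x * (c * u x) \<partial>M) = c * (\<integral>\<^sup>+ x. indicator S x * u x \<partial>M)"
    using um SM by (subst nn_integral_cmult[symmetric]) (auto simp: ac_simps)
  also have "\<dots> \<le> c * (2 * (\<integral>\<^sup>+ x. indicator (S - U) x * u x \<partial>M))"
    using mult(4) by (intro mult_left_mono) auto
  also have "\<dots> = 2 * (c * (\<integral>\<^sup>+ x. indicator (S - U) x * u x \<partial>M))"
    by (simp add: ac_simps)
  also have "c * (\<integral>\<^sup>+ x. indicator (S - U) x * u x \<partial>M) = (\<integral>\<^sup>+ x. indicator (S - U) x * (c * u x) \<partial>M)"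
    using um SM U by (subst nn_integral_cmult[symmetric]) (auto simp: ac_simps)
  finally show ?case .
next
  case (add u v)
  have um: "u \<in> borel_measurable M" using measurable_from_subalg[OF sub add(1)] .
  have vm: "v \<in> borel_measurable M" using measurable_from_subalg[OF sub add(3)] .
  have SM: "S \<in> sets M" using SG sub by (auto simp: subalgebra_def)
  have "(\<integral>\<^sup>+ x. indicator S x * (v x + u x) \<partial>M) = (\<integral>\<^sup>+ x. indicator S x * v x \<partial>M) + (\<integral>\<^sup>+ x. indicator S x * u x \<partial>M)"
    using um vm SM by (subst nn_integral_add[symmetric]) (auto simp: distrib_left)
  also have "\<dots> \<le> 2 * (\<integral>\<^sup>+ x. indicator (S - U) x * v x \<partial>M) + 2 * (\<integral>\<^sup>+ x. indicator (S - U) x * u x \<partial>M)"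
    using add by (intro add_mono) auto
  also have "\<dots> = 2 * ((\<integral>\<^sup>+ x. indicator (S - U) x * v x \<partial>M) + (\<integral>\<^sup>+ x. indicator (S - U) x * u x \<partial>M))"
    by (simp add: distrib_left)
  also have "(\<integral>\<^sup>+ x. indicator (S - U) x * v x \<partial>M) + (\<integral>\<^sup>+ x. indicator (S - U) x * u x \<partial>M) = (\<integral>\<^sup>+ x. indicator (S - U) x * (v x + u x) \<partial>M)"
    using um vm SM U by (subst nn_integral_add[symmetric]) (auto simp: distrib_left)
  finally show ?case .
next
  case (seq U')
  have um: "\<And>i. U' i \<in> borel_measurable M" using measurable_from_subalg[OF sub seq(1)] .
  have SM: "S \<in> sets M" using SG sub by (auto simp: subalgebra_def)
  have inc1: "incseq (\<lambda>i x. indicator S x * U' i x)" for S :: "'a set"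
    using seq unfolding incseq_def le_fun_def by (auto intro!: mult_left_mono)
  have "(\<integral>\<^sup>+ x. indicator S x * (SUP i. U' i) x \<partial>M) = (\<integral>\<^sup>+ x. (SUP i. indicator S x * U' i x) \<partial>M)"
    by (simp add: SUP_mult_left_ennreal image_comp)
  also have "\<dots> = (SUP i. \<integral>\<^sup>+ x. indicator S x * U' i x \<partial>M)"
    using um SM inc1[of S] by (intro nn_integral_monotone_convergence_SUP) auto
  also have "\<dots> \<le> (SUP i. 2 * \<integral>\<^sup>+ x. indicator (S - U) x * U' i x \<partial>M)"
    by (intro SUP_mono) (use seq in blast)
  also have "\<dots> = 2 * (SUP i. \<integral>\<^sup>+ x. indicator (S - U) x * U' i x \<partial>M)"
    by (simp add: SUP_mult_left_ennreal image_comp)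
  also have "(SUP i. \<integral>\<^sup>+ x. indicator (S - U) x * U' i x \<partial>M) = (\<integral>\<^sup>+ x. (SUP i. indicator (S - U) x * U' i x) \<partial>M)"
    using um SM U inc1[of "S - U"] by (intro nn_integral_monotone_convergence_SUP[symmetric]) auto
  also have "\<dots> = (\<integral>\<^sup>+ x. indicator (S - U) x * (SUP i. U' i) x \<partial>M)"
    by (simp add: SUP_mult_left_ennreal image_comp)
  finally show ?case .
qed

lemma filt_mono:
  assumes "\<And>k. sets (F k) \<subseteq> sets (F (Suc k))" "j \<le> k"
  shows "sets (F j) \<subseteq> sets (F k)"
  using assms(2)
proof (induction k rule: dec_induct)
  case (step i)
  then show ?case using assms(1)[of i] by blast
qed simp

lemma filt_meas:
  assumes "\<And>k. subalgebra M (F k)" "\<And>k. sets (F k) \<subseteq> sets (F (Suc k))" "j \<le> k"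
    and "g \<in> borel_measurable (F j)"
  shows "g \<in> borel_measurable (F k)"
proof -
  have "subalgebra (F k) (F j)"
    using assms(1)[of k] assms(1)[of j] filt_mono[of F, OF assms(2) assms(3)]
    by (auto simp: subalgebra_def)
  thus ?thesis using measurable_from_subalg assms(4) by blast
qed

lemma doob_weak:
  fixes h :: "'a \<Rightarrow> real"
  assumes P: "prob_space M" and sub: "\<And>k. subalgebra M (F k)"
    and inc: "\<And>k. sets (F k) \<subseteq> sets (F (Suc k))"
    and hi: "integrable M h" and hnn: "\<And>x. h x \<ge> 0" and lam: "l > 0"
  shows "ennreal l * emeasure M {x\<in>space M. \<exists>k\<le>n. real_cond_exp M (F k) h x \<ge> l}
     \<le> (\<integral>\<^sup>+ x. indicator {x\<in>space M. \<exists>k\<le>n. real_cond_exp M (F k) h x \<ge> l} x * ennreal (h x) \<partial>M)"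
proof -
  interpret prob_space M by fact
  define G where "G k = real_cond_exp M (F k) h" for k
  define L where "L k = {x\<in>space M. G k x \<ge> l}" for k
  define D where "D k = L k - (\<Union>j<k. L j)" for k
  have spF: "space (F k) = space M" for k using sub[of k] by (simp add: subalgebra_def)
  have GF: "G j \<in> borel_measurable (F k)" if "j \<le> k" for j k
    using filt_meas[of M F, OF sub inc that borel_measurable_cond_exp] unfolding G_def by simp
  have LF: "L j \<in> sets (F k)" if "j \<le> k" for j k
  proof -
    have "L j = {x\<in>space (F k). G j x \<ge> l}" unfolding L_def spF ..
    also have "\<dots> \<in> sets (F k)" using GF[OF that] by measurable
    finally show ?thesis .
  qed
  have DF: "D k \<in> sets (F k)" for k unfolding D_def using LF by auto
  have DM: "D k \<in> sets M" for k using DF[of k] sub[of k] by (auto simp: subalgebra_def)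
  have disj: "disjoint_family D" unfolding disjoint_family_on_def D_def
    by (metis Diff_iff UN_I disjoint_iff lessThan_iff linorder_neqE_nat)
  have Ueq: "{x\<in>space M. \<exists>k\<le>n. real_cond_exp M (F k) h x \<ge> l} = (\<Union>k\<le>n. D k)"
  proof (intro set_eqI iffI)
    fix x assume "x \<in> {x\<in>space M. \<exists>k\<le>n. real_cond_exp M (F k) h x \<ge> l}"
    then obtain k where k: "x \<in> space M" "k \<le> n" "G k x \<ge> l" unfolding G_def by auto
    define k0 where "k0 = (LEAST k. G k x \<ge> l)"
    have "G k0 x \<ge> l" unfolding k0_def by (rule LeastI[of _ k]) (use k in auto)
    moreover have "k0 \<le> k" unfolding k0_def by (rule Least_le) (use k in auto)
    moreover have "\<not> G j x \<ge> l" if "j < k0" for j using not_less_Least[OF that[unfolded k0_def]] .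
    ultimately show "x \<in> (\<Union>k\<le>n. D k)" using k unfolding D_def L_def
      by (intro UN_I[of k0]) auto
  next
    fix x assume "x \<in> (\<Union>k\<le>n. D k)"
    thus "x \<in> {x\<in>space M. \<exists>k\<le>n. real_cond_exp M (F k) h x \<ge> l}"
      unfolding D_def L_def G_def by auto
  qed
  have each: "ennreal l * emeasure M (D k) \<le> (\<integral>\<^sup>+ x. indicator (D k) x * ennreal (h x) \<partial>M)" for k
  proof -
    interpret S: sigma_finite_subalgebra M "F k" using sfs[OF P sub] .
    have Gi: "integrable M (G k)" unfolding G_def using S.real_cond_exp_int(1)[OF hi] .
    have "l * measure M (D k) = (\<integral>x\<in>D k. l \<partial>M)"
      using DM by (simp add: set_integral_const emeasure_eq_measure)
    also have "\<dots> \<le> (\<integral>x\<in>D k. G k x \<partial>M)"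
      using integrable_mult_indicator[OF DM Gi] integrable_mult_indicator[OF DM integrable_const[of l]]
      by (intro set_integral_mono) (auto simp: D_def L_def set_integrable_def)
    also have "\<dots> = (\<integral>x\<in>D k. h x \<partial>M)"
      unfolding G_def using S.real_cond_exp_intA[OF hi DF] by simp
    also have "\<dots> = (\<integral>x. indicator (D k) x * h x \<partial>M)"
      by (simp add: set_lebesgue_integral_def)
    finally have r: "l * measure M (D k) \<le> (\<integral>x. indicator (D k) x * h x \<partial>M)" .
    have "(\<integral>\<^sup>+ x. indicator (D k) x * ennreal (h x) \<partial>M) = (\<integral>\<^sup>+ x. ennreal (indicator (D k) x * h x) \<partial>M)"
      by (simp add: indicator_mult_ennreal)
    also have "\<dots> = ennreal (\<integral>x. indicator (D k) x * h x \<partial>M)"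
      using integrable_mult_indicator[OF DM hi] hnn by (intro nn_integral_eq_integral) auto
    finally have e: "(\<integral>\<^sup>+ x. indicator (D k) x * ennreal (h x) \<partial>M) = ennreal (\<integral>x. indicator (D k) x * h x \<partial>M)" .
    show ?thesis unfolding e using r lam
      by (simp add: emeasure_eq_measure ennreal_mult''[symmetric] ennreal_leI)
  qed
  have dn: "disjoint_family_on D {..n}" using disj by (auto simp: disjoint_family_on_def)
  have "ennreal l * emeasure M (\<Union>k\<le>n. D k) = ennreal l * (\<Sum>k\<le>n. emeasure M (D k))"
    using DM dn by (subst sum_emeasure) auto
  also have "\<dots> = (\<Sum>k\<le>n. ennreal l * emeasure M (D k))" by (simp add: sum_distrib_left)
  also have "\<dots> \<le> (\<Sum>k\<le>n. \<integral>\<^sup>+ x. indicator (D k) x * ennreal (h x) \<partial>M)"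
    by (intro sum_mono each)
  also have "\<dots> = (\<integral>\<^sup>+ x. (\<Sum>k\<le>n. indicator (D k) x * ennreal (h x)) \<partial>M)"
    using DM hi by (subst nn_integral_sum) auto
  also have "\<dots> = (\<integral>\<^sup>+ x. indicator (\<Union>k\<le>n. D k) x * ennreal (h x) \<partial>M)"
    using dn by (simp add: indicator_UN_disjoint sum_distrib_right)
  finally show ?thesis unfolding Ueq .
qed

lemma lborel_2t:
  fixes a :: real assumes a: "a \<ge> 0"
  shows "(\<integral>\<^sup>+ t. (if 0 \<le> t \<and> t \<le> a then ennreal (2*t) else 0) \<partial>lborel) = ennreal (a^2)"
proof -
  have "((\<lambda>t. 2*t) has_integral (a^2 - 0^2)) {0..a}"
    using a by (intro fundamental_theorem_of_calculus)
      (auto intro!: derivative_eq_intros simp: has_real_derivative_iff_has_vector_derivative[symmetric])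
  hence "((\<lambda>t. if t \<in> {0..a} then 2*t else 0) has_integral a^2) UNIV"
    by (subst has_integral_restrict_UNIV) simp
  hence "integral\<^sup>N lborel (\<lambda>t. ennreal (if t \<in> {0..a} then 2*t else 0)) = a^2"
    by (intro nn_integral_has_integral_lborel) auto
  moreover have "(\<lambda>t. ennreal (if t \<in> {0..a} then 2*t else 0)) = (\<lambda>t. (if 0 \<le> t \<and> t \<le> a then ennreal (2*t) else 0))"
    by auto
  ultimately show ?thesis by simp
qed

lemma doob_L2:
  fixes h :: "'a \<Rightarrow> real"
  assumes P: "prob_space M" and sub: "\<And>k. subalgebra M (F k)"
    and inc: "\<And>k. sets (F k) \<subseteq> sets (F (Suc k))"
    and hi: "integrable M h" and hnn: "\<And>x. h x \<ge> 0"
  shows "(\<integral>\<^sup>+ x. ennreal ((Max ((\<lambda>k. max 0 (real_cond_exp M (F k) h x)) ` {..n}))^2) \<partial>M)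
     \<le> 4 * (\<integral>\<^sup>+ x. ennreal ((h x)^2) \<partial>M)"
proof -
  interpret prob_space M by fact
  define G where "G k = real_cond_exp M (F k) h" for k
  define Mx where "Mx x = Max ((\<lambda>k. max 0 (G k x)) ` {..n})" for x
  have hm[measurable]: "h \<in> borel_measurable M" using hi by auto
  have Gm[measurable]: "G k \<in> borel_measurable M" for k unfolding G_def by simp
  have Mxm[measurable]: "Mx \<in> borel_measurable M" unfolding Mx_def by measurable
  have Mx0: "Mx x \<ge> 0" for x unfolding Mx_def by (rule order_trans[OF _ Max_ge[of _ "max 0 (G 0 x)"]]) auto
  have Mxiff: "t \<le> Mx x \<longleftrightarrow> (\<exists>k\<le>n. G k x \<ge> t)" if "t > 0" for t x
    unfolding Mx_def using that by (subst Max_ge_iff) (auto simp: le_max_iff_disj)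
  define A where "A = (\<integral>\<^sup>+ x. ennreal ((h x)^2) \<partial>M)"
  have trunc: "(\<integral>\<^sup>+ x. ennreal ((min (Mx x) (real K))^2) \<partial>M) \<le> 4 * A" for K :: nat
  proof -
    define \<phi> where "\<phi> x = min (Mx x) (real K)" for x
    have phim[measurable]: "\<phi> \<in> borel_measurable M" unfolding \<phi>_def by measurable
    have phi0: "\<phi> x \<ge> 0" for x unfolding \<phi>_def using Mx0 by simp
    interpret pair_sigma_finite M lborel by unfold_locales
    define Q where "Q x t = (if 0 \<le> t \<and> t \<le> \<phi> x then ennreal (2*t) else 0)" for x t
    define R where "R x t = (if 0 \<le> t \<and> t \<le> \<phi> x then 2 * ennreal (h x) else 0)" for x t
    have Qm: "case_prod Q \<in> borel_measurable (M \<Otimes>\<^sub>M lborel)" unfolding Q_def by measurable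
    have Rm: "case_prod R \<in> borel_measurable (M \<Otimes>\<^sub>M lborel)" unfolding R_def by measurable
    have pt: "(\<integral>\<^sup>+ x. Q x t \<partial>M) \<le> (\<integral>\<^sup>+ x. R x t \<partial>M)" for t
    proof (cases "t > 0")
      case False
      hence "Q x t = 0" for x unfolding Q_def by auto
      thus ?thesis by simp
    next
      case True
      define A where "A = {x\<in>space M. t \<le> \<phi> x}"
      have AM: "A \<in> sets M" unfolding A_def by measurable
      have "(\<integral>\<^sup>+ x. Q x t \<partial>M) = (\<integral>\<^sup>+ x. ennreal (2*t) * indicator A x \<partial>M)"
        unfolding Q_def A_def using True by (intro nn_integral_cong) (auto simp: indicator_def)
      also have "\<dots> = ennreal (2*t) * emeasure M A" using AM by (rule nn_integral_cmult_indicator)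
      finally have q: "(\<integral>\<^sup>+ x. Q x t \<partial>M) = ennreal (2*t) * emeasure M A" .
      have "(\<integral>\<^sup>+ x. R x t \<partial>M) = (\<integral>\<^sup>+ x. 2 * (indicator A x * ennreal (h x)) \<partial>M)"
        unfolding R_def A_def using True by (intro nn_integral_cong) (auto simp: indicator_def)
      also have "\<dots> = 2 * (\<integral>\<^sup>+ x. indicator A x * ennreal (h x) \<partial>M)"
        using AM by (intro nn_integral_cmult) auto
      finally have r: "(\<integral>\<^sup>+ x. R x t \<partial>M) = 2 * (\<integral>\<^sup>+ x. indicator A x * ennreal (h x) \<partial>M)" .
      show ?thesis
      proof (cases "t \<le> real K")
        case False
        hence "A = {}" unfolding A_def \<phi>_def by auto
        thus ?thesis using q by simp
      next
        case tK: True
        have "A = {x\<in>space M. \<exists>k\<le>n. real_cond_exp M (F k) h x \<ge> t}"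
          unfolding A_def \<phi>_def using Mxiff[OF True] tK unfolding G_def by auto
        hence "ennreal t * emeasure M A \<le> (\<integral>\<^sup>+ x. indicator A x * ennreal (h x) \<partial>M)"
          using doob_weak[of M F h t n, OF P sub inc hi hnn True] by simp
        hence "2 * (ennreal t * emeasure M A) \<le> 2 * (\<integral>\<^sup>+ x. indicator A x * ennreal (h x) \<partial>M)"
          by (intro mult_left_mono) auto
        moreover have "ennreal (2*t) = 2 * ennreal t" using True by (simp add: ennreal_mult)
        ultimately show ?thesis unfolding q r by (simp add: mult.assoc)
      qed
    qed
    have "(\<integral>\<^sup>+ x. ennreal ((\<phi> x)^2) \<partial>M) = (\<integral>\<^sup>+ x. (\<integral>\<^sup>+ t. Q x t \<partial>lborel) \<partial>M)"
      unfolding Q_def using phi0 by (simp add: lborel_2t)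
    also have "\<dots> = (\<integral>\<^sup>+ t. (\<integral>\<^sup>+ x. Q x t \<partial>M) \<partial>lborel)"
      using Fubini'[OF Qm] by simp
    also have "\<dots> \<le> (\<integral>\<^sup>+ t. (\<integral>\<^sup>+ x. R x t \<partial>M) \<partial>lborel)"
      by (intro nn_integral_mono pt)
    also have "\<dots> = (\<integral>\<^sup>+ x. (\<integral>\<^sup>+ t. R x t \<partial>lborel) \<partial>M)"
      using Fubini'[OF Rm] by simp
    also have "\<dots> = (\<integral>\<^sup>+ x. 2 * ennreal (h x) * ennreal (\<phi> x) \<partial>M)"
    proof (intro nn_integral_cong)
      fix x
      have "(\<integral>\<^sup>+ t. R x t \<partial>lborel) = (\<integral>\<^sup>+ t. (2 * ennreal (h x)) * indicator {0..\<phi> x} t \<partial>lborel)"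
        unfolding R_def by (intro nn_integral_cong) (auto simp: indicator_def)
      also have "\<dots> = 2 * ennreal (h x) * ennreal (\<phi> x)"
        using phi0[of x] by (subst nn_integral_cmult_indicator) auto
      finally show "(\<integral>\<^sup>+ t. R x t \<partial>lborel) = 2 * ennreal (h x) * ennreal (\<phi> x)" .
    qed
    finally have B1: "(\<integral>\<^sup>+ x. ennreal ((\<phi> x)^2) \<partial>M) \<le> (\<integral>\<^sup>+ x. 2 * ennreal (h x) * ennreal (\<phi> x) \<partial>M)" .
    define B where "B = (\<integral>\<^sup>+ x. ennreal ((\<phi> x)^2) \<partial>M)"
    define C where "C = (\<integral>\<^sup>+ x. ennreal ((\<phi> x)^2 / 2) \<partial>M)"
    have pw: "2 * ennreal (h x) * ennreal (\<phi> x) \<le> 2 * ennreal ((h x)^2) + ennreal ((\<phi> x)^2 / 2)" for x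
    proof -
      have "2 * h x * \<phi> x \<le> 2 * (h x)^2 + (\<phi> x)^2 / 2"
        using sum_squares_ge_zero[of "2 * h x - \<phi> x" 0] by (simp add: power2_eq_square algebra_simps)
      hence "ennreal (2 * h x * \<phi> x) \<le> ennreal (2 * (h x)^2 + (\<phi> x)^2 / 2)" by (rule ennreal_leI)
      moreover have "ennreal (2 * h x * \<phi> x) = 2 * ennreal (h x) * ennreal (\<phi> x)"
        using hnn[of x] phi0[of x] by (simp add: ennreal_mult)
      moreover have "ennreal (2 * (h x)^2 + (\<phi> x)^2 / 2) = 2 * ennreal ((h x)^2) + ennreal ((\<phi> x)^2 / 2)"
      proof -
        have "ennreal (2 * (h x)^2 + (\<phi> x)^2 / 2) = ennreal (2 * (h x)^2) + ennreal ((\<phi> x)^2 / 2)"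
          by (rule ennreal_plus) auto
        moreover have "ennreal (2 * (h x)^2) = 2 * ennreal ((h x)^2)" by (simp add: ennreal_mult)
        ultimately show ?thesis by simp
      qed
      ultimately show ?thesis by simp
    qed
    have "B \<le> (\<integral>\<^sup>+ x. 2 * ennreal (h x) * ennreal (\<phi> x) \<partial>M)"
      unfolding B_def by (rule B1)
    also have "\<dots> \<le> (\<integral>\<^sup>+ x. 2 * ennreal ((h x)^2) + ennreal ((\<phi> x)^2 / 2) \<partial>M)"
      by (rule nn_integral_mono) (rule pw)
    also have "\<dots> = 2 * A + C"
      unfolding A_def C_def by (subst nn_integral_add) (auto simp: nn_integral_cmult)
    finally have BAC: "B \<le> 2 * A + C" .
    have "2 * C = (\<integral>\<^sup>+ x. 2 * ennreal ((\<phi> x)^2 / 2) \<partial>M)"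
      unfolding C_def by (subst nn_integral_cmult) auto
    also have "\<dots> = B" unfolding B_def
    proof (intro nn_integral_cong)
      fix x
      have "ennreal 2 * ennreal ((\<phi> x)^2 / 2) = ennreal (2 * ((\<phi> x)^2 / 2))"
        by (rule ennreal_mult[symmetric]) auto
      thus "2 * ennreal ((\<phi> x)^2 / 2) = ennreal ((\<phi> x)^2)" by simp
    qed
    finally have C2: "2 * C = B" .
    have "B \<le> (\<integral>\<^sup>+ x. ennreal ((real K)^2) \<partial>M)"
      unfolding B_def using phi0 by (intro nn_integral_mono ennreal_leI power_mono) (auto simp: \<phi>_def)
    also have "\<dots> < \<infinity>" by (simp add: emeasure_space_1)
    finally have Bf: "B \<noteq> \<infinity>" by simp
    have "B + B \<le> B + 4 * A"
    proof -
      have "B + B = 2 * B" by (simp add: mult_2)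
      also have "\<dots> \<le> 2 * (2 * A + C)" using BAC by (intro mult_left_mono) auto
      also have "\<dots> = 4 * A + 2 * C" by (simp add: distrib_left mult.assoc[symmetric])
      also have "\<dots> = B + 4 * A" using C2 by (simp add: add.commute)
      finally show ?thesis .
    qed
    hence "B \<le> 4 * A" using Bf by (simp add: ennreal_add_left_cancel_le)
    thus ?thesis unfolding B_def \<phi>_def .
  qed
  define f where "f K x = ennreal ((min (Mx x) (real K))^2)" for K :: nat and x
  have fm: "f K \<in> borel_measurable M" for K unfolding f_def by measurable
  have finc: "incseq f"
    unfolding incseq_def le_fun_def f_def using Mx0
    by (auto intro!: ennreal_leI power_mono)
  have fsup: "ennreal ((Mx x)^2) = (SUP K. f K x)" for x
  proof (rule antisym)
    obtain K :: nat where "Mx x \<le> real K" using real_arch_simple by blast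
    hence "f K x = ennreal ((Mx x)^2)" unfolding f_def by simp
    thus "ennreal ((Mx x)^2) \<le> (SUP K. f K x)" by (metis SUP_upper UNIV_I)
    show "(SUP K. f K x) \<le> ennreal ((Mx x)^2)"
      unfolding f_def using Mx0[of x] by (intro SUP_least ennreal_leI power_mono) auto
  qed
  have "(\<integral>\<^sup>+ x. ennreal ((Mx x)^2) \<partial>M) = (\<integral>\<^sup>+ x. (SUP K. f K x) \<partial>M)"
    by (simp add: fsup)
  also have "\<dots> = (SUP K. integral\<^sup>N M (f K))"
    using finc fm by (rule nn_integral_monotone_convergence_SUP)
  also have "\<dots> \<le> 4 * A" unfolding f_def using trunc by (intro SUP_least) auto
  finally show ?thesis unfolding Mx_def G_def A_def .
qed

lemma pr_bound:
  fixes f :: "'a \<Rightarrow> real"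
  assumes P: "prob_space M" and sub: "subalgebra M G" and fm[measurable]: "f \<in> borel_measurable M"
    and p: "p > 0" and r: "0 < r" "r < 1"
    and hi: "integrable M (\<lambda>x. \<bar>f x\<bar> powr (p/2))"
  shows "AE x in M. \<bar>Inf {t. t \<in> \<rat> \<and> real_cond_exp M G (indicator {y\<in>space M. f y > t}) x \<le> r}\<bar>
     \<le> (max 0 (real_cond_exp M G (\<lambda>x. \<bar>f x\<bar> powr (p/2)) x) / min r (1-r)) powr (2/p)"
proof -
  interpret prob_space M by fact
  interpret S: sigma_finite_subalgebra M G using sfs[OF P sub] .
  define s where "s = p/2"
  define h where "h x = \<bar>f x\<bar> powr s" for x
  define H where "H = real_cond_exp M G h"
  define e where "e q = real_cond_exp M G (indicator {y\<in>space M. f y > q})" for q :: real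
  have s0: "s > 0" unfolding s_def using p by simp
  have hi': "integrable M h" using hi unfolding h_def s_def .
  have Ii: "integrable M (indicator {y\<in>space M. f y > q} :: 'a \<Rightarrow> real)" for q
    by (intro integrable_real_indicator) (auto simp: less_top[symmetric])
  have a: "AE x in M. e q x \<le> H x / q powr s" if q: "q > 0" for q
  proof -
    have "AE x in M. indicator {y\<in>space M. f y > q} x \<le> h x / q powr s"
    proof (intro AE_I2)
      fix x assume "x \<in> space M"
      show "indicator {y\<in>space M. f y > q} x \<le> h x / q powr s"
      proof (cases "f x > q")
        case True
        hence "q powr s \<le> \<bar>f x\<bar> powr s" using q s0 by (intro powr_mono2) auto
        thus ?thesis using q True by (simp add: indicator_def h_def)
      qed (auto simp: indicator_def h_def)
    qed
    hence "AE x in M. e q x \<le> real_cond_exp M G (\<lambda>x. h x / q powr s) x"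
      unfolding e_def using Ii hi' by (intro S.real_cond_exp_mono) auto
    moreover have "AE x in M. real_cond_exp M G (\<lambda>x. h x / q powr s) x = H x / q powr s"
      unfolding H_def using hi' by (rule S.real_cond_exp_cdiv)
    ultimately show ?thesis by eventually_elim simp
  qed
  have b: "AE x in M. e q x \<ge> 1 - H x / (-q) powr s" if q: "q < 0" for q
  proof -
    have "AE x in M. 1 - h x / (-q) powr s \<le> indicator {y\<in>space M. f y > q} x"
    proof (intro AE_I2)
      fix x assume "x \<in> space M"
      show "1 - h x / (-q) powr s \<le> indicator {y\<in>space M. f y > q} x"
      proof (cases "f x > q")
        case False
        hence "(-q) powr s \<le> \<bar>f x\<bar> powr s" using q s0 by (intro powr_mono2) auto
        thus ?thesis using q \<open>x \<in> space M\<close> False by (simp add: indicator_def h_def)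
      qed (use \<open>x \<in> space M\<close> in \<open>auto simp: indicator_def h_def\<close>)
    qed
    hence "AE x in M. real_cond_exp M G (\<lambda>x. 1 - h x / (-q) powr s) x \<le> e q x"
      unfolding e_def using Ii hi' by (intro S.real_cond_exp_mono) auto
    moreover have "AE x in M. real_cond_exp M G (\<lambda>x. 1 - h x / (-q) powr s) x
        = real_cond_exp M G (\<lambda>x. 1) x - real_cond_exp M G (\<lambda>x. h x / (-q) powr s) x"
      using hi' by (intro S.real_cond_exp_diff) auto
    moreover have "AE x in M. real_cond_exp M G (\<lambda>x. h x / (-q) powr s) x = H x / (-q) powr s"
      unfolding H_def using hi' by (rule S.real_cond_exp_cdiv)
    moreover have "AE x in M. real_cond_exp M G (\<lambda>x. 1) x = 1"
      by (intro S.real_cond_exp_F_meas) auto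
    ultimately show ?thesis by eventually_elim simp
  qed
  have "AE x in M. \<forall>q::rat. (real_of_rat q > 0 \<longrightarrow> e (real_of_rat q) x \<le> H x / (real_of_rat q) powr s)
        \<and> (real_of_rat q < 0 \<longrightarrow> e (real_of_rat q) x \<ge> 1 - H x / (- real_of_rat q) powr s)"
    unfolding AE_all_countable
  proof
    fix q :: rat
    show "AE x in M. (real_of_rat q > 0 \<longrightarrow> e (real_of_rat q) x \<le> H x / (real_of_rat q) powr s)
        \<and> (real_of_rat q < 0 \<longrightarrow> e (real_of_rat q) x \<ge> 1 - H x / (- real_of_rat q) powr s)"
      using a[of "real_of_rat q"] b[of "real_of_rat q"]
      by (cases "real_of_rat q > 0"; cases "real_of_rat q < 0") (auto elim!: eventually_mono)
  qed
  then show ?thesis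
  proof (rule AE_mp[OF _ AE_I2], intro impI)
    fix x assume x: "\<forall>q::rat. (real_of_rat q > 0 \<longrightarrow> e (real_of_rat q) x \<le> H x / (real_of_rat q) powr s)
        \<and> (real_of_rat q < 0 \<longrightarrow> e (real_of_rat q) x \<ge> 1 - H x / (- real_of_rat q) powr s)"
    have "\<bar>Inf {t. t \<in> \<rat> \<and> e t x \<le> r}\<bar> \<le> (max 0 (H x) / min r (1-r)) powr (1/s)"
    proof (rule quantile_bound[OF s0])
      show "e q x \<le> H x / q powr s" if "q \<in> \<rat>" "q > 0" for q
        using that x by (auto elim!: Rats_cases)
      show "e q x \<ge> 1 - H x / (-q) powr s" if "q \<in> \<rat>" "q < 0" for q
        using that x by (auto elim!: Rats_cases)
    qed (use r in auto)
    thus "\<bar>Inf {t. t \<in> \<rat> \<and> real_cond_exp M G (indicator {y\<in>space M. f y > t}) x \<le> r}\<bar>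
     \<le> (max 0 (real_cond_exp M G (\<lambda>x. \<bar>f x\<bar> powr (p/2)) x) / min r (1-r)) powr (2/p)"
      unfolding e_def H_def h_def s_def by simp
  qed
qed

lemma powr_2p: fixes y p :: real assumes "y \<ge> 0" "p > 0" shows "(y powr (2/p)) powr p = y^2"
proof -
  have "(y powr (2/p)) powr p = y powr 2" using assms by (simp add: powr_powr)
  also have "\<dots> = y^2" using assms by (cases "y = 0") (auto simp: powr_realpow[of y 2, simplified])
  finally show ?thesis .
qed

lemma main_chain:
  fixes w :: "nat \<Rightarrow> 'a \<Rightarrow> real" and p \<rho> :: real
  assumes P: "prob_space M" and sub: "\<And>k. subalgebra M (F k)"
    and inc: "\<And>k. sets (F k) \<subseteq> sets (F (Suc k))"
    and SF: "\<And>k. S k \<in> sets (F k)"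
    and sp: "\<And>k A. A \<in> sets (F k) \<Longrightarrow> A \<subseteq> S k \<Longrightarrow> measure M (A - (\<Union>m\<in>{Suc k..}. S m)) \<ge> 1/2 * measure M A"
    and p: "p > 0" and rho: "\<rho> > 0"
    and wF: "\<And>k. w k \<in> borel_measurable (F k)" and w0: "\<And>k x. w k x \<ge> 0"
    and fin: "(\<integral>\<^sup>+ x. ennreal ((Max ((\<lambda>k. w k x) ` {..n}))^2) \<partial>M) < \<infinity>"
  shows "(\<integral>\<^sup>+ x. ennreal ((\<Sum>k<n. indicator (S k) x * (w k x / \<rho>) powr (2/p)) powr p) \<partial>M)
     \<le> ennreal ((2 + 4 * p * (4*p) powr (p-1)) / \<rho>^2) * (\<integral>\<^sup>+ x. ennreal ((Max ((\<lambda>k. w k x) ` {..n}))^2) \<partial>M)"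
proof -
  interpret prob_space M by fact
  define u where "u k x = (w k x / \<rho>) powr (2/p)" for k x
  define Phi where "Phi m x = (\<Sum>k<m. indicator (S k) x * u k x)" for m x
  define Mx where "Mx x = Max ((\<lambda>k. w k x) ` {..n})" for x
  define A where "A x = (Mx x / \<rho>) powr (2/p)" for x
  define E where "E k = S k - (\<Union>m\<in>{Suc k..}. S m)" for k
  define b where "b k x = (if p \<ge> 1 then p * u k x * Phi (Suc k) x powr (p-1) else u k x powr p)" for k x
  define Bx where "Bx x = (if p \<ge> 1 then p * A x * Phi n x powr (p-1) else A x powr p)" for x
  have spF: "space (F k) = space M" for k using sub[of k] by (simp add: subalgebra_def)
  have SM: "S k \<in> sets M" for k using SF[of k] sub[of k] by (auto simp: subalgebra_def)
  have wM[measurable]: "w k \<in> borel_measurable M" for k using measurable_from_subalg[OF sub wF] .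
  have SM'[measurable]: "S k \<in> sets M" for k by (rule SM)
  have u0: "u k x \<ge> 0" for k x unfolding u_def by simp
  have Phi0: "Phi m x \<ge> 0" for m x unfolding Phi_def using u0 by (auto intro!: sum_nonneg)
  have Mx_ge: "w k x \<le> Mx x" if "k \<le> n" for k x unfolding Mx_def using that by (intro Max_ge) auto
  have Mx0: "Mx x \<ge> 0" for x using Mx_ge[of 0 x] w0[of 0 x] by simp
  have A0: "A x \<ge> 0" for x unfolding A_def by simp
  have uA: "u k x \<le> A x" if "k \<le> n" for k x
    unfolding u_def A_def using Mx_ge[OF that, of x] w0[of k x] rho p
    by (intro powr_mono2 divide_right_mono) auto
  have PhiM[measurable]: "Phi m \<in> borel_measurable M" for m unfolding Phi_def u_def by measurable
  have MxM[measurable]: "Mx \<in> borel_measurable M" unfolding Mx_def by measurable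
  have AM[measurable]: "A \<in> borel_measurable M" unfolding A_def by measurable
  have Ap: "A x powr p = (Mx x)^2 / \<rho>^2" for x
    unfolding A_def using powr_2p[of "Mx x / \<rho>" p] Mx0[of x] rho p by (simp add: power_divide)
  have tele: "Phi m x powr p \<le> (\<Sum>k<m. indicator (S k) x * b k x)" for m x
  proof (induction m)
    case 0 then show ?case by (simp add: Phi_def)
  next
    case (Suc m)
    show ?case
    proof (cases "x \<in> S m")
      case False
      hence "Phi (Suc m) x = Phi m x" unfolding Phi_def by simp
      thus ?thesis using Suc False by simp
    next
      case True
      have eq: "Phi (Suc m) x = Phi m x + u m x" unfolding Phi_def using True by simp
      have "Phi (Suc m) x powr p \<le> Phi m x powr p + b m x"
      proof (cases "p \<ge> 1")
        case True
        then show ?thesis unfolding b_def eq using incr_ge1[OF True Phi0 u0] by simp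
      next
        case False
        then show ?thesis unfolding b_def eq using incr_le1[OF p _ Phi0 u0] by simp
      qed
      thus ?thesis using Suc True by simp
    qed
  qed
  have b0: "b k x \<ge> 0" for k x unfolding b_def using u0 Phi0 p by auto
  have PhiMono: "Phi m x \<le> Phi n x" if "m \<le> n" for m x
    unfolding Phi_def using that u0 by (intro sum_mono2) auto
  have bB: "b k x \<le> Bx x" if "k < n" for k x
  proof (cases "p \<ge> 1")
    case True
    have "u k x * Phi (Suc k) x powr (p-1) \<le> A x * Phi n x powr (p-1)"
      using uA[of k x] that PhiMono[of "Suc k" x] Phi0 u0 A0 True
      by (intro mult_mono powr_mono2) auto
    thus ?thesis unfolding b_def Bx_def using True p by (simp add: mult.assoc)
  next
    case False
    thus ?thesis unfolding b_def Bx_def using uA[of k x] that u0 p by (auto intro!: powr_mono2)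
  qed
  have wFk: "w j \<in> borel_measurable (F k)" if "j \<le> k" for j k
    using filt_meas[of M F, OF sub inc that wF] .
  have SFk: "S j \<in> sets (F k)" if "j \<le> k" for j k
    using filt_mono[of F, OF inc that] SF[of j] by auto
  have PhiF: "Phi (Suc k) \<in> borel_measurable (F k)" for k
  proof (unfold Phi_def, rule borel_measurable_sum)
    fix j assume "j \<in> {..<Suc k}"
    hence [measurable]: "w j \<in> borel_measurable (F k)" "S j \<in> sets (F k)" using wFk SFk by auto
    show "(\<lambda>x. indicator (S j) x * u j x) \<in> borel_measurable (F k)" unfolding u_def by measurable
  qed
  have bF: "(\<lambda>x. ennreal (b k x)) \<in> borel_measurable (F k)" for k
  proof -
    have [measurable]: "w k \<in> borel_measurable (F k)" "Phi (Suc k) \<in> borel_measurable (F k)"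
      using wF PhiF by auto
    show ?thesis unfolding b_def u_def by measurable
  qed
  have UM: "(\<Union>m\<in>{Suc k..}. S m) \<in> sets M" for k
    using SM by (intro sets.countable_UN') auto
  have sk: "(\<integral>\<^sup>+ x. indicator (S k) x * ennreal (b k x) \<partial>M) \<le> 2 * (\<integral>\<^sup>+ x. indicator (E k) x * ennreal (b k x) \<partial>M)" for k
    unfolding E_def by (rule sparse_ineq[OF P sub[of k] SF[of k] UM sp bF])
  have EM: "E k \<in> sets M" for k unfolding E_def using SM UM by auto
  have Edisj: "disjoint_family E"
  proof (unfold disjoint_family_on_def, intro ballI impI)
    fix i j :: nat assume "i \<noteq> j"
    show "E i \<inter> E j = {}"
    proof (cases "i < j")
      case True
      hence "E j \<subseteq> (\<Union>m\<in>{Suc i..}. S m)" unfolding E_def by auto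
      thus ?thesis unfolding E_def by auto
    next
      case False
      hence "j < i" using \<open>i \<noteq> j\<close> by simp
      hence "E i \<subseteq> (\<Union>m\<in>{Suc j..}. S m)" unfolding E_def by auto
      thus ?thesis unfolding E_def by auto
    qed
  qed
  have Esum: "(\<Sum>k<n. indicator (E k) x) \<le> (1::ennreal)" for x
  proof -
    have "(\<Sum>k<n. indicator (E k) x) = (indicator (\<Union>k<n. E k) x :: ennreal)"
      using Edisj by (subst indicator_UN_disjoint) (auto simp: disjoint_family_on_def)
    thus ?thesis by (simp add: indicator_def)
  qed
  have BxM[measurable]: "Bx \<in> borel_measurable M" unfolding Bx_def by measurable
  have bM[measurable]: "(\<lambda>x. ennreal (b k x)) \<in> borel_measurable M" for k
    using measurable_from_subalg[OF sub bF] .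
  define X where "X = (\<integral>\<^sup>+ x. ennreal (Phi n x powr p) \<partial>M)"
  have "X \<le> (\<integral>\<^sup>+ x. (\<Sum>k<n. indicator (S k) x * ennreal (b k x)) \<partial>M)"
    unfolding X_def
  proof (intro nn_integral_mono)
    fix x
    have "ennreal (Phi n x powr p) \<le> ennreal (\<Sum>k<n. indicator (S k) x * b k x)"
      by (intro ennreal_leI tele)
    also have "\<dots> = (\<Sum>k<n. ennreal (indicator (S k) x * b k x))"
      using b0 by (intro sum_ennreal[symmetric]) auto
    also have "\<dots> = (\<Sum>k<n. indicator (S k) x * ennreal (b k x))"
      by (simp add: indicator_mult_ennreal)
    finally show "ennreal (Phi n x powr p) \<le> (\<Sum>k<n. indicator (S k) x * ennreal (b k x))" .
  qed
  also have "\<dots> = (\<Sum>k<n. \<integral>\<^sup>+ x. indicator (S k) x * ennreal (b k x) \<partial>M)"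
    by (intro nn_integral_sum) auto
  also have "\<dots> \<le> (\<Sum>k<n. 2 * (\<integral>\<^sup>+ x. indicator (E k) x * ennreal (b k x) \<partial>M))"
    by (intro sum_mono sk)
  also have "\<dots> \<le> (\<Sum>k<n. 2 * (\<integral>\<^sup>+ x. indicator (E k) x * ennreal (Bx x) \<partial>M))"
    using bB by (intro sum_mono mult_left_mono nn_integral_mono) (auto intro!: mult_left_mono ennreal_leI)
  also have "\<dots> = 2 * (\<integral>\<^sup>+ x. (\<Sum>k<n. indicator (E k) x) * ennreal (Bx x) \<partial>M)"
  proof -
    have "(\<Sum>k<n. 2 * (\<integral>\<^sup>+ x. indicator (E k) x * ennreal (Bx x) \<partial>M)) = 2 * (\<Sum>k<n. (\<integral>\<^sup>+ x. indicator (E k) x * ennreal (Bx x) \<partial>M))"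
      by (rule sum_distrib_left[symmetric])
    also have "(\<Sum>k<n. (\<integral>\<^sup>+ x. indicator (E k) x * ennreal (Bx x) \<partial>M)) = (\<integral>\<^sup>+ x. (\<Sum>k<n. indicator (E k) x * ennreal (Bx x)) \<partial>M)"
      using EM by (intro nn_integral_sum[symmetric]) auto
    also have "\<dots> = (\<integral>\<^sup>+ x. (\<Sum>k<n. indicator (E k) x) * ennreal (Bx x) \<partial>M)"
      by (simp only: sum_distrib_right)
    finally show ?thesis .
  qed
  also have "\<dots> \<le> 2 * (\<integral>\<^sup>+ x. ennreal (Bx x) \<partial>M)"
    using Esum by (intro mult_left_mono nn_integral_mono) (auto, metis mult_1 mult_right_mono zero_le)
  finally have XB: "X \<le> 2 * (\<integral>\<^sup>+ x. ennreal (Bx x) \<partial>M)" .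
  define Y where "Y = (\<integral>\<^sup>+ x. ennreal ((Mx x)^2) \<partial>M)"
  define C0 where "C0 = (2 + 4 * p * (4*p) powr (p-1)) / \<rho>^2"
  have cmul: "(\<integral>\<^sup>+ x. ennreal (c * (Mx x)^2) \<partial>M) = ennreal c * Y" if "c \<ge> 0" for c
  proof -
    have "(\<integral>\<^sup>+ x. ennreal (c * (Mx x)^2) \<partial>M) = (\<integral>\<^sup>+ x. ennreal c * ennreal ((Mx x)^2) \<partial>M)"
      using that by (intro nn_integral_cong) (simp add: ennreal_mult)
    also have "\<dots> = ennreal c * Y" unfolding Y_def by (rule nn_integral_cmult) auto
    finally show ?thesis .
  qed
  have XY: "X \<le> ennreal C0 * Y"
  proof (cases "p \<ge> 1")
    case False
    have "(\<integral>\<^sup>+ x. ennreal (Bx x) \<partial>M) = (\<integral>\<^sup>+ x. ennreal ((1/\<rho>^2) * (Mx x)^2) \<partial>M)"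
      unfolding Bx_def using False by (intro nn_integral_cong) (simp add: Ap)
    also have "\<dots> = ennreal (1/\<rho>^2) * Y" by (rule cmul) simp
    finally have "X \<le> 2 * (ennreal (1/\<rho>^2) * Y)" using XB by simp
    also have "\<dots> = ennreal (2/\<rho>^2) * Y"
    proof -
      have "ennreal 2 * ennreal (1/\<rho>^2) = ennreal (2 * (1/\<rho>^2))" by (rule ennreal_mult[symmetric]) auto
      thus ?thesis by (simp add: mult.assoc[symmetric])
    qed
    also have "\<dots> \<le> ennreal C0 * Y" unfolding C0_def using p rho
      by (intro mult_right_mono ennreal_leI divide_right_mono) auto
    finally show ?thesis .
  next
    case True
    define c1 where "c1 = p * (4*p) powr (p-1) / \<rho>^2"
    have c10: "c1 \<ge> 0" unfolding c1_def using p by simp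
    define Z where "Z = (\<integral>\<^sup>+ x. ennreal (Phi n x powr p / 4) \<partial>M)"
    have pw: "Bx x \<le> c1 * (Mx x)^2 + Phi n x powr p / 4" for x
    proof -
      have "A x * Phi n x powr (p-1) \<le> (4*p) powr (p-1) * A x powr p + Phi n x powr p / (4*p)"
        using young_like[OF True _ A0 Phi0, of "4*p"] p by simp
      hence "p * (A x * Phi n x powr (p-1)) \<le> p * ((4*p) powr (p-1) * A x powr p + Phi n x powr p / (4*p))"
        using p by (intro mult_left_mono) auto
      also have "\<dots> = c1 * (Mx x)^2 + Phi n x powr p / 4"
        unfolding c1_def Ap using p by (simp add: field_simps)
      finally show ?thesis unfolding Bx_def using True by (simp add: mult.assoc)
    qed
    have "(\<integral>\<^sup>+ x. ennreal (Bx x) \<partial>M) \<le> (\<integral>\<^sup>+ x. ennreal (c1 * (Mx x)^2) + ennreal (Phi n x powr p / 4) \<partial>M)"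
    proof (intro nn_integral_mono)
      fix x
      have "ennreal (Bx x) \<le> ennreal (c1 * (Mx x)^2 + Phi n x powr p / 4)" by (intro ennreal_leI pw)
      also have "\<dots> = ennreal (c1 * (Mx x)^2) + ennreal (Phi n x powr p / 4)"
        using c10 by (intro ennreal_plus) auto
      finally show "ennreal (Bx x) \<le> ennreal (c1 * (Mx x)^2) + ennreal (Phi n x powr p / 4)" .
    qed
    also have "\<dots> = (\<integral>\<^sup>+ x. ennreal (c1 * (Mx x)^2) \<partial>M) + Z"
      unfolding Z_def by (rule nn_integral_add) measurable
    also have "\<dots> = ennreal c1 * Y + Z" using cmul[OF c10] by simp
    finally have "2 * (\<integral>\<^sup>+ x. ennreal (Bx x) \<partial>M) \<le> 2 * (ennreal c1 * Y + Z)"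
      by (rule mult_left_mono) simp
    with XB have XcZ: "X \<le> 2 * (ennreal c1 * Y + Z)" by (rule order_trans)
    have Z4: "4 * Z = X"
    proof -
      have "4 * Z = (\<integral>\<^sup>+ x. 4 * ennreal (Phi n x powr p / 4) \<partial>M)"
        unfolding Z_def by (subst nn_integral_cmult) auto
      also have "\<dots> = X" unfolding X_def
      proof (intro nn_integral_cong)
        fix x
        have "ennreal 4 * ennreal (Phi n x powr p / 4) = ennreal (4 * (Phi n x powr p / 4))"
          by (rule ennreal_mult[symmetric]) auto
        thus "4 * ennreal (Phi n x powr p / 4) = ennreal (Phi n x powr p)" by simp
      qed
      finally show ?thesis .
    qed
    have Xfin: "X \<noteq> \<infinity>"
    proof -
      have "Phi n x \<le> real n * A x" for x
      proof -
        have "Phi n x \<le> (\<Sum>k<n. A x)" unfolding Phi_def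
          using uA u0 A0 by (intro sum_mono) (auto simp: indicator_def intro: order_trans)
        thus ?thesis by simp
      qed
      hence "Phi n x powr p \<le> (real n * A x) powr p" for x using Phi0 p by (intro powr_mono2) auto
      hence "Phi n x powr p \<le> (real n powr p / \<rho>^2) * (Mx x)^2" for x
        using A0 by (simp add: powr_mult Ap)
      hence "X \<le> (\<integral>\<^sup>+ x. ennreal ((real n powr p / \<rho>^2) * (Mx x)^2) \<partial>M)"
        unfolding X_def by (intro nn_integral_mono ennreal_leI) auto
      also have "\<dots> = ennreal (real n powr p / \<rho>^2) * Y" by (rule cmul) simp
      also have "\<dots> < \<infinity>" using fin unfolding Y_def Mx_def by (simp add: ennreal_mult_less_top)
      finally show ?thesis by simp
    qed
    have "X + X \<le> X + ennreal (4 * c1) * Y"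
    proof -
      have "X + X = 2 * X" by (simp add: mult_2)
      also have "\<dots> \<le> 2 * (2 * (ennreal c1 * Y + Z))" using XcZ by (intro mult_left_mono) auto
      also have "\<dots> = ennreal (4 * c1) * Y + 4 * Z"
        using c10 by (simp add: distrib_left ennreal_mult mult.assoc[symmetric])
      also have "\<dots> = X + ennreal (4 * c1) * Y" using Z4 by (simp add: add.commute)
      finally show ?thesis .
    qed
    hence "X \<le> ennreal (4 * c1) * Y" using Xfin by (simp add: ennreal_add_left_cancel_le)
    also have "\<dots> \<le> ennreal C0 * Y" unfolding C0_def c1_def using p rho
      by (intro mult_right_mono ennreal_leI) (auto simp: field_simps)
    finally show ?thesis .
  qed
  show ?thesis using XY unfolding X_def Y_def C0_def Phi_def u_def Mx_def .
qed

theorem lemma2p4: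
  fixes M :: "'a measure" and F :: "nat \<Rightarrow> 'a measure" and p r :: real
  assumes "prob_space M"
    and "generating_filtration M F"
    and "regular_filtration M F"
    and "0 < p" and "0 < r" and "r < 1"
  shows "\<exists>C>0. \<forall>S f. sparse_seq M F S \<and> f \<in> borel_measurable M \<and>
            (\<integral>\<^sup>+ x. ennreal (\<bar>f x\<bar> powr p) \<partial>M) < \<infinity> \<longrightarrow>
            (AE x in M. summable (\<lambda>k. indicator (S k) x * Pr_op M F r k f x)) \<and>
            (\<integral>\<^sup>+ x. ennreal (\<bar>sparse_op M F r S f x\<bar> powr p) \<partial>M)
              \<le> ennreal C * (\<integral>\<^sup>+ x. ennreal (\<bar>f x\<bar> powr p) \<partial>M)"
proof -
  note P = assms(1) and p = assms(4) and r = assms(5,6)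
  interpret prob_space M by fact
  have sub: "\<And>k. subalgebra M (F k)" and inc: "\<And>k. sets (F k) \<subseteq> sets (F (Suc k))"
    using assms(2) unfolding generating_filtration_def by auto
  define \<rho> where "\<rho> = min r (1-r)"
  have rho: "\<rho> > 0" unfolding \<rho>_def using r by simp
  define C0 where "C0 = (2 + 4 * p * (4*p) powr (p-1)) / \<rho>^2"
  define C where "C = C0 * 4"
  have C0: "C0 > 0" unfolding C0_def using p rho by (intro divide_pos_pos add_pos_nonneg) auto
  have "C > 0" unfolding C_def using C0 by simp
  moreover have "(AE x in M. summable (\<lambda>k. indicator (S k) x * Pr_op M F r k f x)) \<and>
            (\<integral>\<^sup>+ x. ennreal (\<bar>sparse_op M F r S f x\<bar> powr p) \<partial>M)
              \<le> ennreal C * (\<integral>\<^sup>+ x. ennreal (\<bar>f x\<bar> powr p) \<partial>M)"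
    if sps: "sparse_seq M F S" and fm[measurable]: "f \<in> borel_measurable M"
      and fp: "(\<integral>\<^sup>+ x. ennreal (\<bar>f x\<bar> powr p) \<partial>M) < \<infinity>" for S f
  proof -
    define I where "I = (\<integral>\<^sup>+ x. ennreal (\<bar>f x\<bar> powr p) \<partial>M)"
    define h where "h x = \<bar>f x\<bar> powr (p/2)" for x
    have hm[measurable]: "h \<in> borel_measurable M" unfolding h_def by measurable
    have h0: "h x \<ge> 0" for x unfolding h_def by simp
    have h2: "(h x)^2 = \<bar>f x\<bar> powr p" for x
      unfolding h_def by (simp add: power2_eq_square powr_add[symmetric])
    have hi: "integrable M h"
    proof (rule integrableI_bounded)
      have "(\<integral>\<^sup>+ x. ennreal (norm (h x)) \<partial>M) \<le> (\<integral>\<^sup>+ x. 1 + ennreal (\<bar>f x\<bar> powr p) \<partial>M)"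
      proof (intro nn_integral_mono)
        fix x
        have "h x \<le> 1 + (h x)^2"
        proof (cases "h x \<le> 1")
          case True thus ?thesis using h0[of x] by (smt (verit) zero_le_power2)
        next
          case False thus ?thesis by (smt (verit) mult_le_cancel_left1 power2_eq_square)
        qed
        hence "ennreal (norm (h x)) \<le> ennreal (1 + \<bar>f x\<bar> powr p)" using h0[of x] h2[of x] by (intro ennreal_leI) auto
        thus "ennreal (norm (h x)) \<le> 1 + ennreal (\<bar>f x\<bar> powr p)" by (simp add: ennreal_plus)
      qed
      also have "\<dots> = 1 + I" unfolding I_def by (subst nn_integral_add) (auto simp: emeasure_space_1)
      also have "\<dots> < \<infinity>" using fp unfolding I_def by simp
      finally show "(\<integral>\<^sup>+ x. ennreal (norm (h x)) \<partial>M) < \<infinity>" .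
    qed simp
    define G where "G k = real_cond_exp M (F k) h" for k
    define w where "w k x = max 0 (G k x)" for k x
    have wF: "w k \<in> borel_measurable (F k)" for k unfolding w_def G_def by measurable
    have w0: "w k x \<ge> 0" for k x unfolding w_def by simp
    define u where "u k x = (w k x / \<rho>) powr (2/p)" for k x
    define Phi where "Phi n x = (\<Sum>k<n. indicator (S k) x * u k x)" for n x
    have SF: "S k \<in> sets (F k)" for k using sps unfolding sparse_seq_def by auto
    have sp: "\<And>k A. A \<in> sets (F k) \<Longrightarrow> A \<subseteq> S k \<Longrightarrow> measure M (A - (\<Union>m\<in>{Suc k..}. S m)) \<ge> 1/2 * measure M A"
      using sps unfolding sparse_seq_def by auto
    have doob: "(\<integral>\<^sup>+ x. ennreal ((Max ((\<lambda>k. w k x) ` {..n}))^2) \<partial>M) \<le> 4 * I" for n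
      using doob_L2[of M F h n, OF P sub inc hi h0] unfolding w_def G_def I_def h2 .
    have mainb: "(\<integral>\<^sup>+ x. ennreal (Phi n x powr p) \<partial>M) \<le> ennreal C * I" for n
    proof -
      have fin: "(\<integral>\<^sup>+ x. ennreal ((Max ((\<lambda>k. w k x) ` {..n}))^2) \<partial>M) < \<infinity>"
        using doob[of n] fp unfolding I_def by (simp add: ennreal_mult_less_top le_less_trans)
      have "(\<integral>\<^sup>+ x. ennreal (Phi n x powr p) \<partial>M) \<le> ennreal C0 * (\<integral>\<^sup>+ x. ennreal ((Max ((\<lambda>k. w k x) ` {..n}))^2) \<partial>M)"
        using main_chain[of M F S p \<rho> w n, OF P sub inc SF sp p rho wF w0 fin]
        unfolding Phi_def u_def C0_def by simp
      also have "\<dots> \<le> ennreal C0 * (4 * I)" using doob[of n] by (intro mult_left_mono) auto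
      also have "\<dots> = ennreal C * I" unfolding C_def using C0 by (simp add: ennreal_mult mult.assoc)
      finally show ?thesis .
    qed
    have SM[measurable]: "S k \<in> sets M" for k using SF[of k] sub[of k] by (auto simp: subalgebra_def)
    have PhiM[measurable]: "Phi n \<in> borel_measurable M" for n
      unfolding Phi_def u_def w_def G_def by measurable
    have u0: "u k x \<ge> 0" for k x unfolding u_def by simp
    have Phi0: "Phi n x \<ge> 0" for n x unfolding Phi_def using u0 by (auto intro!: sum_nonneg)
    have PhiMono: "Phi m x \<le> Phi n x" if "m \<le> n" for m n x
      unfolding Phi_def using that u0 by (intro sum_mono2) auto
    have Pb: "AE x in M. \<forall>k. \<bar>Pr_op M F r k f x\<bar> \<le> u k x"
      unfolding AE_all_countable
    proof
      fix k
      have hi': "integrable M (\<lambda>x. \<bar>f x\<bar> powr (p/2))" using hi unfolding h_def .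
      show "AE x in M. \<bar>Pr_op M F r k f x\<bar> \<le> u k x"
        using pr_bound[OF P sub[of k] fm p r hi']
        unfolding Pr_op_def u_def w_def G_def h_def \<rho>_def .
    qed
    define Psi where "Psi x = (SUP n. ennreal (Phi n x powr p))" for x
    have PsiM[measurable]: "Psi \<in> borel_measurable M" unfolding Psi_def by measurable
    have incs: "incseq (\<lambda>n x. ennreal (Phi n x powr p))"
      unfolding incseq_def le_fun_def using PhiMono Phi0 p by (auto intro!: ennreal_leI powr_mono2)
    have "(\<integral>\<^sup>+ x. Psi x \<partial>M) = (SUP n. \<integral>\<^sup>+ x. ennreal (Phi n x powr p) \<partial>M)"
      unfolding Psi_def using incs by (intro nn_integral_monotone_convergence_SUP) auto
    also have "\<dots> \<le> ennreal C * I" using mainb by (intro SUP_least) auto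
    finally have PsiI: "(\<integral>\<^sup>+ x. Psi x \<partial>M) \<le> ennreal C * I" .
    have "ennreal C * I < \<infinity>" using fp unfolding I_def by (simp add: ennreal_mult_less_top)
    with PsiI have "(\<integral>\<^sup>+ x. Psi x \<partial>M) < \<infinity>" by (rule le_less_trans)
    hence "(\<integral>\<^sup>+ x. Psi x \<partial>M) \<noteq> \<infinity>" by simp
    hence PsiF: "AE x in M. Psi x \<noteq> \<infinity>" by (intro nn_integral_PInf_AE) auto
    have good: "summable (\<lambda>k. indicator (S k) x * Pr_op M F r k f x) \<and>
        ennreal (\<bar>sparse_op M F r S f x\<bar> powr p) \<le> Psi x"
      if x1: "\<forall>k. \<bar>Pr_op M F r k f x\<bar> \<le> u k x" and x2: "Psi x \<noteq> \<infinity>" for x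
    proof -
      define c where "c = enn2real (Psi x)"
      have c0: "c \<ge> 0" unfolding c_def by simp
      have Pc: "Psi x = ennreal c" unfolding c_def using x2 by (simp add: ennreal_enn2real_if)
      have Phic: "Phi n x \<le> c powr (1/p)" for n
      proof -
        have "ennreal (Phi n x powr p) \<le> Psi x" unfolding Psi_def by (rule SUP_upper) auto
        hence "Phi n x powr p \<le> c" using Pc c0 by (simp add: ennreal_le_iff)
        hence "(Phi n x powr p) powr (1/p) \<le> c powr (1/p)" using p by (intro powr_mono2) auto
        thus ?thesis using p Phi0[of n x] by (simp add: powr_powr)
      qed
      define a where "a k = indicator (S k) x * u k x" for k
      have a0: "a k \<ge> 0" for k unfolding a_def using u0 by simp
      have asum: "(\<Sum>k<n. a k) = Phi n x" for n unfolding a_def Phi_def ..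
      have suma: "summable a"
      proof (rule bounded_imp_summable[OF a0])
        fix n show "(\<Sum>k\<le>n. a k) \<le> c powr (1/p)"
          using Phic[of "Suc n"] asum[of "Suc n"] by (simp add: lessThan_Suc_atMost)
      qed
      define g where "g k = indicator (S k) x * Pr_op M F r k f x" for k
      have ga: "norm (g k) \<le> a k" for k
        unfolding g_def a_def using x1 by (auto simp: indicator_def abs_mult)
      have sumg: "summable g" by (rule summable_comparison_test'[OF suma ga])
      have sumag: "summable (\<lambda>k. \<bar>g k\<bar>)" using ga by (intro summable_comparison_test'[OF suma]) auto
      have "\<bar>sparse_op M F r S f x\<bar> = \<bar>suminf g\<bar>" unfolding sparse_op_def g_def ..
      also have "\<dots> \<le> (\<Sum>k. \<bar>g k\<bar>)" by (rule summable_rabs[OF sumag])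
      also have "\<dots> \<le> suminf a" using ga sumag suma by (intro suminf_le) auto
      also have "\<dots> \<le> c powr (1/p)" using suma asum Phic by (intro suminf_le_const) auto
      finally have "\<bar>sparse_op M F r S f x\<bar> powr p \<le> (c powr (1/p)) powr p"
        using p by (intro powr_mono2) auto
      also have "\<dots> = c" using p c0 by (simp add: powr_powr)
      finally have "ennreal (\<bar>sparse_op M F r S f x\<bar> powr p) \<le> Psi x" using Pc by (simp add: ennreal_leI)
      thus ?thesis using sumg unfolding g_def by simp
    qed
    have AEgood: "AE x in M. summable (\<lambda>k. indicator (S k) x * Pr_op M F r k f x) \<and>
        ennreal (\<bar>sparse_op M F r S f x\<bar> powr p) \<le> Psi x"
      using Pb PsiF by eventually_elim (use good in blast)
    have "(\<integral>\<^sup>+ x. ennreal (\<bar>sparse_op M F r S f x\<bar> powr p) \<partial>M) \<le> (\<integral>\<^sup>+ x. Psi x \<partial>M)"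
      using AEgood by (intro nn_integral_mono_AE) (auto elim: eventually_mono)
    also have "\<dots> \<le> ennreal C * I" by (rule PsiI)
    finally show ?thesis using AEgood unfolding I_def by (auto elim: eventually_mono)
  qed
  ultimately show ?thesis by blast
qed

end
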